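(* Let $\epsilon>0$ be a constant. There exists a constant $\delta>0$ such that, for all sufficiently large $n$, if $V\subseteq\mathbb{Z}_2^{2n}$ is a uniformly random subspace of dimension $m\ge\epsilon n$, then $\Pr[V\subseteq V^\perp]\le2^{-\delta n^2}$.
   Context: Symplectic inner product on $\mathbb{Z}_2^{2n}$: $(\mathbf a,\mathbf b)\odot(\mathbf a',\mathbf b')=\mathbf a\cdot\mathbf b'+\mathbf a'\cdot\mathbf b\pmod2$. For a subspace $S$, $S^\perp=\{\mathbf v:\mathbf v\odot\mathbf w=0\ \forall\mathbf w\in S\}$ is its symplectic complement; $V\subseteq V^\perp$ means $V$ is isotropic. *)

theory Defs
  imports Complex_Main "HOL-Library.Z2"
begin

text \<open>Vectors of Z_2^{2n}: functions nat => bit vanishing outside coordinates 0..2n-1.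
  A vector v = (a,b) has a = (v 0, ..., v (n-1)) and b = (v n, ..., v (2n-1)).\<close>

definition vecs :: "nat \<Rightarrow> (nat \<Rightarrow> bit) set" where
  "vecs n = {v. \<forall>i\<ge>2*n. v i = 0}"

definition symp :: "nat \<Rightarrow> (nat \<Rightarrow> bit) \<Rightarrow> (nat \<Rightarrow> bit) \<Rightarrow> bit" where
  "symp n v w = (\<Sum>i<n. v i * w (n+i)) + (\<Sum>i<n. w i * v (n+i))"

definition symp_perp :: "nat \<Rightarrow> (nat \<Rightarrow> bit) set \<Rightarrow> (nat \<Rightarrow> bit) set" where
  "symp_perp n S = {v \<in> vecs n. \<forall>w\<in>S. symp n v w = 0}"

definition lincomb :: "(nat \<Rightarrow> bit) set \<Rightarrow> ((nat \<Rightarrow> bit) \<Rightarrow> bit) \<Rightarrow> (nat \<Rightarrow> bit)" where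
  "lincomb B c = (\<lambda>i. \<Sum>b\<in>B. c b * b i)"

definition span2 :: "(nat \<Rightarrow> bit) set \<Rightarrow> (nat \<Rightarrow> bit) set" where
  "span2 B = {lincomb B c | c. True}"

definition lin_indep2 :: "(nat \<Rightarrow> bit) set \<Rightarrow> bool" where
  "lin_indep2 B \<longleftrightarrow> finite B \<and> (\<forall>c. lincomb B c = (\<lambda>i. 0) \<longrightarrow> (\<forall>b\<in>B. c b = 0))"

definition is_subspace :: "nat \<Rightarrow> (nat \<Rightarrow> bit) set \<Rightarrow> bool" where
  "is_subspace n V \<longleftrightarrow> V \<subseteq> vecs n \<and> (\<lambda>i. 0) \<in> V \<and>
     (\<forall>u\<in>V. \<forall>w\<in>V. (\<lambda>i. u i + w i) \<in> V) \<and> (\<forall>a. \<forall>u\<in>V. (\<lambda>i. a * u i) \<in> V)"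

definition subspace_dim :: "nat \<Rightarrow> nat \<Rightarrow> (nat \<Rightarrow> bit) set \<Rightarrow> bool" where
  "subspace_dim n m V \<longleftrightarrow> is_subspace n V \<and>
     (\<exists>B. B \<subseteq> V \<and> lin_indep2 B \<and> card B = m \<and> span2 B = V)"

definition prob_isotropic :: "nat \<Rightarrow> nat \<Rightarrow> real" where
  "prob_isotropic n m =
     real (card {V. subspace_dim n m V \<and> V \<subseteq> symp_perp n V}) / real (card {V. subspace_dim n m V})"

end

theory Submission
  imports Defs "HOL-Library.FuncSet"
begin


declare add_bit_eq_xor[simp del] mult_bit_eq_and[simp del]

lemma bit_add_self [simp]: "(x::bit) + x = 0"
  by (cases x) simp_all

lemma bit_add_cancel [simp]: "(x::bit) + (x + y) = y"
  by (cases x; cases y) simp_all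

lemma card_bit_UNIV: "card (UNIV::bit set) = 2"
proof -
  have "(UNIV::bit set) = {0,1}" by (auto intro: bit.exhaust)
  then show ?thesis by (metis card_2_iff zero_neq_one)
qed

lemma lincomb_insert:
  assumes "finite B" "x \<notin> B"
  shows "lincomb (insert x B) c = (\<lambda>i. c x * x i + lincomb B c i)"
  using assms by (simp add: lincomb_def)

lemma lincomb_upd:
  assumes "x \<notin> B"
  shows "lincomb B (c(x:=a)) = lincomb B c"
  unfolding lincomb_def using assms by (intro ext sum.cong) auto

lemma span2_empty: "span2 {} = {\<lambda>i. 0}"
  by (simp add: span2_def lincomb_def)

lemma span2_insert:
  assumes "finite B" "x \<notin> B"
  shows "span2 (insert x B) = span2 B \<union> (\<lambda>v i. v i + x i) ` span2 B"
proof (intro equalityI subsetI)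
  fix v assume "v \<in> span2 (insert x B)"
  then obtain c where v: "v = lincomb (insert x B) c" by (auto simp: span2_def)
  show "v \<in> span2 B \<union> (\<lambda>v i. v i + x i) ` span2 B"
  proof (cases "c x")
    case zero
    then have "v = lincomb B c" using v lincomb_insert[OF assms] by simp
    then show ?thesis by (auto simp: span2_def)
  next
    case one
    then have "v = (\<lambda>i. lincomb B c i + x i)" using v lincomb_insert[OF assms] by (simp add: add.commute)
    then show ?thesis by (auto simp: span2_def)
  qed
next
  fix v assume "v \<in> span2 B \<union> (\<lambda>v i. v i + x i) ` span2 B"
  then show "v \<in> span2 (insert x B)"
  proof
    assume "v \<in> span2 B"
    then obtain c where v: "v = lincomb B c" by (auto simp: span2_def)
    have "lincomb (insert x B) (c(x:=0)) = v"
      using lincomb_insert[OF assms, of "c(x:=0)"] lincomb_upd[OF assms(2)] v by simp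
    then show ?thesis unfolding span2_def by blast
  next
    assume "v \<in> (\<lambda>v i. v i + x i) ` span2 B"
    then obtain c where v: "v = (\<lambda>i. lincomb B c i + x i)" by (auto simp: span2_def)
    have "lincomb (insert x B) (c(x:=1)) = v"
      using lincomb_insert[OF assms, of "c(x:=1)"] lincomb_upd[OF assms(2)] v by (simp add: add.commute)
    then show ?thesis unfolding span2_def by blast
  qed
qed

lemma lincomb_add: "(\<lambda>i. lincomb B c i + lincomb B d i) = lincomb B (\<lambda>b. c b + d b)"
  by (simp add: lincomb_def sum.distrib distrib_right)

lemma span2_add: "u \<in> span2 B \<Longrightarrow> w \<in> span2 B \<Longrightarrow> (\<lambda>i. u i + w i) \<in> span2 B"
  unfolding span2_def using lincomb_add by blast

lemma span2_smult: "u \<in> span2 B \<Longrightarrow> (\<lambda>i. a * u i) \<in> span2 B"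
proof -
  assume "u \<in> span2 B"
  then obtain c where "u = lincomb B c" by (auto simp: span2_def)
  then have "(\<lambda>i. a * u i) = lincomb B (\<lambda>b. a * c b)"
    by (simp add: lincomb_def sum_distrib_left mult.assoc)
  then show ?thesis by (auto simp: span2_def)
qed

lemma span2_zero: "(\<lambda>i. 0) \<in> span2 B"
proof -
  have "lincomb B (\<lambda>b. 0) = (\<lambda>i. 0)" by (simp add: lincomb_def)
  then show ?thesis unfolding span2_def by (metis (mono_tags, lifting) mem_Collect_eq)
qed

lemma span2_superset: "finite B \<Longrightarrow> B \<subseteq> span2 B"
proof
  fix b assume "finite B" "b \<in> B"
  have "lincomb B (\<lambda>x. if x = b then 1 else 0) = b"
  proof -
    have "\<And>i. (\<Sum>x\<in>B. (if x = b then 1 else 0) * x i) = b i"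
      using \<open>finite B\<close> \<open>b \<in> B\<close> by (simp add: if_distrib[where f="\<lambda>a. a * _"] cong: if_cong)
    then show ?thesis by (simp add: lincomb_def)
  qed
  then show "b \<in> span2 B" unfolding span2_def by (metis (mono_tags, lifting) mem_Collect_eq)
qed

lemma lin_indep2_insert:
  assumes "finite B" "x \<notin> B"
  shows "lin_indep2 (insert x B) \<longleftrightarrow> lin_indep2 B \<and> x \<notin> span2 B"
proof
  assume L: "lin_indep2 (insert x B)"
  show "lin_indep2 B \<and> x \<notin> span2 B"
  proof
    show "lin_indep2 B" unfolding lin_indep2_def
    proof (intro conjI allI impI ballI)
      fix c b assume c: "lincomb B c = (\<lambda>i. 0)" and b: "b \<in> B"
      have "lincomb (insert x B) (c(x:=0)) = (\<lambda>i. 0)"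
        using lincomb_insert[OF assms, of "c(x:=0)"] lincomb_upd[OF assms(2)] c by simp
      then have "(c(x:=0)) b = 0" using L b unfolding lin_indep2_def by blast
      then show "c b = 0" using b assms(2) by (auto split: if_splits)
    qed (rule assms(1))
  next
    show "x \<notin> span2 B"
    proof
      assume "x \<in> span2 B"
      then obtain c where xc: "x = lincomb B c" by (auto simp: span2_def)
      have "lincomb (insert x B) (c(x:=1)) = (\<lambda>i. 0)"
        using lincomb_insert[OF assms, of "c(x:=1)"] lincomb_upd[OF assms(2)] xc by simp
      then have "(c(x:=1)) x = 0" using L unfolding lin_indep2_def by blast
      then show False by simp
    qed
  qed
next
  assume R: "lin_indep2 B \<and> x \<notin> span2 B"
  show "lin_indep2 (insert x B)" unfolding lin_indep2_def
  proof (intro conjI allI impI ballI)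
    show "finite (insert x B)" using assms by simp
    fix c b assume c: "lincomb (insert x B) c = (\<lambda>i. 0)" and b: "b \<in> insert x B"
    have e: "\<And>i. c x * x i + lincomb B c i = 0" using c lincomb_insert[OF assms, of c] by metis
    have cx: "c x = 0"
    proof (rule ccontr)
      assume "c x \<noteq> 0"
      then have "c x = 1" by simp
      then have "x = lincomb B c" using e
        by (metis bit_add_cancel add.commute add_0_right mult_1 ext)
      then show False using R unfolding span2_def by blast
    qed
    then have "lincomb B c = (\<lambda>i. 0)" using e by (intro ext) simp
    then have "\<forall>b\<in>B. c b = 0" using R unfolding lin_indep2_def by blast
    then show "c b = 0" using b cx by auto
  qed
qed

lemma card_span2:
  assumes "lin_indep2 B"
  shows "card (span2 B) = 2 ^ card B \<and> finite (span2 B)"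
proof -
  have "finite B" using assms by (simp add: lin_indep2_def)
  then show ?thesis using assms
  proof (induction B rule: finite_induct)
    case empty
    then show ?case by (simp add: span2_empty)
  next
    case (insert x B)
    let ?A = "span2 B" and ?f = "\<lambda>v i. v i + x i"
    have li: "lin_indep2 B" and xn: "x \<notin> ?A" using lin_indep2_insert insert by auto
    have IH: "card ?A = 2 ^ card B" "finite ?A" using insert li by auto
    have inj: "inj_on ?f ?A"
    proof (rule inj_onI)
      fix u v assume "?f u = ?f v"
      then have "\<And>i. u i + x i = v i + x i" by metis
      then show "u = v" by (intro ext) (metis add_right_cancel)
    qed
    have disj: "?A \<inter> ?f ` ?A = {}"
    proof (rule ccontr)
      assume "?A \<inter> ?f ` ?A \<noteq> {}"
      then obtain u where u: "u \<in> ?A" "?f u \<in> ?A" by auto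
      have "(\<lambda>i. u i + (u i + x i)) \<in> ?A" using span2_add[OF u] .
      then have "x \<in> ?A" by simp
      then show False using xn by simp
    qed
    have "card (span2 (insert x B)) = card ?A + card (?f ` ?A)"
      using span2_insert[OF insert(1,2)] disj IH(2) by (simp add: card_Un_disjoint)
    also have "\<dots> = 2 ^ card (insert x B)" using card_image[OF inj] IH insert by simp
    finally show ?case using span2_insert[OF insert(1,2)] IH(2) by simp
  qed
qed



lemma span2_subset_subspace:
  assumes "is_subspace n W" "finite B" "B \<subseteq> W"
  shows "span2 B \<subseteq> W"
  using assms(2,3)
proof (induction B rule: finite_induct)
  case empty
  then show ?case using assms(1) by (simp add: span2_empty is_subspace_def)
next
  case (insert x B)
  then have "span2 B \<subseteq> W" "x \<in> W" by auto
  moreover have "(\<lambda>v i. v i + x i) ` span2 B \<subseteq> W"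
    using \<open>span2 B \<subseteq> W\<close> \<open>x \<in> W\<close> assms(1) unfolding is_subspace_def by blast
  ultimately show ?case using span2_insert[OF insert(1,2)] by simp
qed

lemma vecs_subspace: "is_subspace n (vecs n)"
  by (simp add: is_subspace_def vecs_def)

lemma vecs_aux: "\<forall>a'\<in>{..<2 * n} \<rightarrow>\<^sub>E UNIV. restrict (\<lambda>i. if i < 2 * n then a' i else 0) {..<2 * n} = (a'::nat\<Rightarrow>bit)"
proof
  fix a' :: "nat \<Rightarrow> bit" assume a: "a' \<in> {..<2 * n} \<rightarrow>\<^sub>E UNIV"
  have "restrict (\<lambda>i. if i < 2 * n then a' i else 0) {..<2 * n} = restrict a' {..<2*n}"
    by (rule restrict_ext) simp
  also have "\<dots> = a'" using PiE_restrict[OF a] .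
  finally show "restrict (\<lambda>i. if i < 2 * n then a' i else 0) {..<2 * n} = a'" .
qed

lemma vecs_bij: "bij_betw (\<lambda>v. restrict v {..<2*n}) (vecs n) (PiE {..<2*n} (\<lambda>_. UNIV))"
proof (rule bij_betw_byWitness[where f' = "\<lambda>(f::nat\<Rightarrow>bit) i. if i < 2*n then f i else 0"])
  show "\<forall>a\<in>vecs n. (\<lambda>i. if i < 2 * n then restrict a {..<2 * n} i else 0) = a"
    by (auto simp: vecs_def fun_eq_iff)
  show "\<forall>a'\<in>{..<2 * n} \<rightarrow>\<^sub>E UNIV. restrict (\<lambda>i. if i < 2 * n then a' i else 0) {..<2 * n} = (a'::nat\<Rightarrow>bit)"
    by (intro ballI) (erule vecs_aux[rule_format])
  show "(\<lambda>v. restrict v {..<2 * n}) ` vecs n \<subseteq> {..<2 * n} \<rightarrow>\<^sub>E UNIV" by (rule image_subsetI) (simp only: restrict_PiE_iff UNIV_I ball_simps, simp)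
  show "(\<lambda>(f::nat\<Rightarrow>bit) i. if i < 2 * n then f i else 0) ` ({..<2 * n} \<rightarrow>\<^sub>E UNIV) \<subseteq> vecs n"
    unfolding vecs_def by (rule image_subsetI) simp
qed

lemma vecs_finite: "finite (vecs n)"
proof -
  have "finite (UNIV::bit set)" using card_bit_UNIV card.infinite by fastforce
  then show ?thesis using bij_betw_finite[OF vecs_bij] by (simp add: finite_PiE)
qed

lemma vecs_card: "card (vecs n) = 2 ^ (2*n)"
  using bij_betw_same_card[OF vecs_bij] by (simp add: card_PiE card_bit_UNIV)

lemma span2_subspace:
  assumes "finite B" "B \<subseteq> vecs n"
  shows "is_subspace n (span2 B)"
  unfolding is_subspace_def
  by (intro conjI ballI allI span2_add span2_smult span2_zero span2_subset_subspace[OF vecs_subspace assms])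



definition indl :: "(nat \<Rightarrow> bit) set \<Rightarrow> nat \<Rightarrow> (nat \<Rightarrow> bit) list set" where
  "indl W k = {xs. length xs = k \<and> distinct xs \<and> set xs \<subseteq> W \<and> lin_indep2 (set xs)}"

lemma indl_0: "indl W 0 = {[]}"
  by (auto simp: indl_def lin_indep2_def)

lemma indl_Suc:
  "indl W (Suc k) = (\<lambda>(xs,y). y#xs) ` Sigma (indl W k) (\<lambda>xs. W - span2 (set xs))"
proof (intro equalityI subsetI)
  fix zs assume "zs \<in> indl W (Suc k)"
  then obtain y xs where zs: "zs = y # xs" and l: "length xs = k" "distinct xs" "y \<notin> set xs"
     "set xs \<subseteq> W" "y \<in> W" "lin_indep2 (insert y (set xs))"
    unfolding indl_def by (cases zs) auto
  then have "lin_indep2 (set xs)" "y \<notin> span2 (set xs)" using lin_indep2_insert[of "set xs" y] l(3,6) by (meson List.finite_set)+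
  then show "zs \<in> (\<lambda>(xs,y). y#xs) ` Sigma (indl W k) (\<lambda>xs. W - span2 (set xs))"
    using zs l unfolding indl_def by auto
next
  fix zs assume "zs \<in> (\<lambda>(xs,y). y#xs) ` Sigma (indl W k) (\<lambda>xs. W - span2 (set xs))"
  then obtain xs y where zs: "zs = y # xs" and xs: "xs \<in> indl W k" and y: "y \<in> W" "y \<notin> span2 (set xs)"
    by auto
  then have "y \<notin> set xs" using span2_superset[of "set xs"] by auto
  then show "zs \<in> indl W (Suc k)" using zs xs y lin_indep2_insert[of "set xs" y] unfolding indl_def by auto
qed

lemma inj_cons_pair: "inj_on (\<lambda>(xs,y). y#xs) A"
  by (auto simp: inj_on_def)

lemma indl_finite: "finite W \<Longrightarrow> finite (indl W k)"
  by (induction k) (auto simp: indl_0 indl_Suc)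

lemma card_indl:
  assumes "is_subspace n W" "finite W"
  shows "card (indl W k) = (\<Prod>i<k. card W - 2^i)"
proof (induction k)
  case 0
  then show ?case by (simp add: indl_0)
next
  case (Suc k)
  have "card (indl W (Suc k)) = card (Sigma (indl W k) (\<lambda>xs. W - span2 (set xs)))"
    unfolding indl_Suc by (rule card_image[OF inj_cons_pair])
  also have "\<dots> = (\<Sum>xs\<in>indl W k. card (W - span2 (set xs)))"
    using indl_finite[OF assms(2)] assms(2) by (intro card_SigmaI) auto
  also have "\<dots> = (\<Sum>xs\<in>indl W k. card W - 2^k)"
  proof (rule sum.cong)
    fix xs assume xs: "xs \<in> indl W k"
    then have "span2 (set xs) \<subseteq> W" "card (span2 (set xs)) = 2^k" "finite (span2 (set xs))"
      using span2_subset_subspace[OF assms(1)] card_span2[of "set xs"] distinct_card[of xs]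
      unfolding indl_def by auto
    then show "card (W - span2 (set xs)) = card W - 2^k"
      by (simp add: card_Diff_subset)
  qed simp
  also have "\<dots> = (\<Prod>i<Suc k. card W - 2^i)" using Suc by simp
  finally show ?case .
qed



definition chi :: "bit \<Rightarrow> real" where "chi b = (if b = 0 then 1 else -1)"

lemma chi_add: "chi (a + b) = chi a * chi b"
  by (cases a; cases b) (simp_all add: chi_def)

lemma chi_simps [simp]: "chi 0 = 1" "chi 1 = -1"
  by (simp_all add: chi_def)

lemma chi_sum: "finite X \<Longrightarrow> (\<Prod>x\<in>X. chi (f x)) = chi (\<Sum>x\<in>X. f x)"
  by (induction X rule: finite_induct) (simp_all add: chi_add)

definition vsum :: "(nat \<Rightarrow> bit) set \<Rightarrow> (nat \<Rightarrow> bit)" where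
  "vsum X = (\<lambda>i. \<Sum>x\<in>X. x i)"

lemma symp_add1: "symp n (\<lambda>i. u i + v i) z = symp n u z + symp n v z"
  unfolding symp_def by (simp only: distrib_right distrib_left sum.distrib ac_simps)

lemma symp_add2: "symp n y (\<lambda>i. u i + v i) = symp n y u + symp n y v"
  unfolding symp_def by (simp only: distrib_right distrib_left sum.distrib ac_simps)

lemma symp_zero2: "symp n y (\<lambda>i. 0) = 0"
  by (simp add: symp_def)

lemma symp_vsum: "finite X \<Longrightarrow> symp n y (vsum X) = (\<Sum>x\<in>X. symp n y x)"
proof (induction X rule: finite_induct)
  case empty
  then show ?case by (simp add: vsum_def symp_zero2)
next
  case (insert x X)
  have "vsum (insert x X) = (\<lambda>i. x i + vsum X i)" using insert by (simp add: vsum_def)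
  then show ?case using insert symp_add2 by simp
qed

lemma vsum_vecs: "X \<subseteq> vecs n \<Longrightarrow> vsum X \<in> vecs n"
  unfolding vecs_def vsum_def by (auto intro!: sum.neutral)

lemma vsum_nonzero:
  assumes "lin_indep2 B" "X \<subseteq> B" "X \<noteq> {}"
  shows "vsum X \<noteq> (\<lambda>i. 0)"
proof
  assume z: "vsum X = (\<lambda>i. 0)"
  have fin: "finite B" using assms(1) by (simp add: lin_indep2_def)
  have "lincomb B (\<lambda>b. if b \<in> X then 1 else 0) = vsum X"
  proof (rule ext)
    fix i
    have "(\<Sum>b\<in>B. (if b \<in> X then 1 else 0) * b i) = (\<Sum>b\<in>B. (if b \<in> X then b i else 0))"
      by (rule sum.cong) auto
    also have "\<dots> = (\<Sum>b\<in>B \<inter> X. b i)" by (rule sum.inter_restrict[OF fin, of "\<lambda>b. b i" X, symmetric])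
    also have "\<dots> = vsum X i" using assms(2) by (simp add: vsum_def Int_absorb1)
    finally show "lincomb B (\<lambda>b. if b \<in> X then 1 else 0) i = vsum X i" by (simp add: lincomb_def)
  qed
  then have L0: "lincomb B (\<lambda>b. if b \<in> X then 1 else 0) = (\<lambda>i. 0)" using z by simp
  have H: "\<And>c. lincomb B c = (\<lambda>i. 0) \<Longrightarrow> \<forall>b\<in>B. c b = 0" using assms(1) unfolding lin_indep2_def by blast
  obtain x where "x \<in> X" using assms(3) by blast
  then have "x \<in> B" using assms(2) by blast
  then have "(if x \<in> X then 1 else 0) = (0::bit)" using H[OF L0] by blast
  then show False using \<open>x \<in> X\<close> by simp
qed

lemma t2:
  assumes "j < n" "z j = 1"
  shows "\<exists>e\<in>vecs n. symp n e z = 1"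
proof -
    define e where "e = (\<lambda>i. if i = n + j then 1 else (0::bit))"
    have "e \<in> vecs n" using assms unfolding vecs_def e_def by auto
    moreover have "symp n e z = 1"
    proof -
      have "(\<Sum>i<n. e i * z (n+i)) = 0" by (rule sum.neutral) (auto simp: e_def)
      moreover have "(\<Sum>i<n. z i * e (n+i)) = (\<Sum>i<n. if i = j then z j else 0)"
        by (rule sum.cong) (auto simp: e_def)
      moreover have "(\<Sum>i<n. if i = j then z j else 0) = z j" using assms by (simp add: sum.delta)
      ultimately show ?thesis using assms by (simp add: symp_def)
    qed
    ultimately show ?thesis by blast
qed

lemma t3:
  assumes "k < n" "z (n+k) = 1"
  shows "\<exists>e\<in>vecs n. symp n e z = 1"
proof -
    define e where "e = (\<lambda>i. if i = k then 1 else (0::bit))"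
    have "e \<in> vecs n" using assms unfolding vecs_def e_def by auto
    moreover have "symp n e z = 1"
    proof -
      have "(\<Sum>i<n. z i * e (n+i)) = 0" by (rule sum.neutral) (use assms in \<open>auto simp: e_def\<close>)
      moreover have "(\<Sum>i<n. e i * z (n+i)) = (\<Sum>i<n. if i = k then z (n+k) else 0)"
        by (rule sum.cong) (auto simp: e_def)
      moreover have "(\<Sum>i<n. if i = k then z (n+k) else 0) = z (n+k)" using assms by (simp add: sum.delta)
      ultimately show ?thesis using assms by (simp add: symp_def)
    qed
    ultimately show ?thesis by blast
qed
lemma t4: "\<not> (j::nat) < n \<Longrightarrow> \<exists>k. j = n + k"
  by (rule exI[of _ "j - n"]) simp

lemma exists_dual:
  assumes "z \<in> vecs n" "z \<noteq> (\<lambda>i. 0)"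
  shows "\<exists>e\<in>vecs n. symp n e z = 1"
proof -
  obtain j where "z j \<noteq> 0" using assms(2) by (auto simp: fun_eq_iff)
  then have j: "z j = 1" by simp
  have jn: "j < 2*n"
  proof (rule ccontr)
    assume "\<not> j < 2*n"
    then have "z j = 0" using assms(1) unfolding vecs_def by simp
    then show False using j by simp
  qed
  show ?thesis
  proof (cases "j < n")
    case True
    then show ?thesis using t2 j by blast
  next
    case False
    then obtain k where k: "j = n + k" using t4 by blast
    then have "k < n" using jn by simp
    then show ?thesis using t3[of k n z] j k by simp
  qed
qed



lemma chi_balanced:
  assumes "e \<in> vecs n" "symp n e z = 1"
  shows "(\<Sum>y\<in>vecs n. chi (symp n y z)) = 0"
proof -
  let ?f = "\<lambda>(y::nat\<Rightarrow>bit) i. y i + e i"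
  have bij: "bij_betw ?f (vecs n) (vecs n)"
  proof (rule bij_betw_byWitness[where f' = ?f])
    show "\<forall>a\<in>vecs n. ?f (?f a) = a" by (simp add: add.assoc)
    show "\<forall>a\<in>vecs n. ?f (?f a) = a" by (simp add: add.assoc)
    show "?f ` vecs n \<subseteq> vecs n" using assms(1) unfolding vecs_def by auto
    show "?f ` vecs n \<subseteq> vecs n" using assms(1) unfolding vecs_def by auto
  qed
  have "(\<Sum>y\<in>vecs n. chi (symp n y z)) = (\<Sum>y\<in>vecs n. chi (symp n (?f y) z))"
    using sum.reindex_bij_betw[OF bij, of "\<lambda>y. chi (symp n y z)"] by simp
  also have "\<dots> = (\<Sum>y\<in>vecs n. - chi (symp n y z))"
    by (rule sum.cong) (simp_all add: symp_add1 assms(2) chi_add)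
  finally show ?thesis by (simp add: sum_negf)
qed

lemma perp_count:
  assumes "lin_indep2 B" "B \<subseteq> vecs n"
  shows "real (card {y\<in>vecs n. \<forall>x\<in>B. symp n y x = 0}) * 2 ^ card B = 2 ^ (2*n)"
proof -
  let ?P = "{y\<in>vecs n. \<forall>x\<in>B. symp n y x = 0}"
  have fin: "finite B" using assms(1) by (simp add: lin_indep2_def)
  have "(\<Sum>y\<in>vecs n. \<Prod>x\<in>B. chi (symp n y x) + 1) = (\<Sum>y\<in>vecs n. if y \<in> ?P then 2 ^ card B else 0)"
  proof (rule sum.cong)
    fix y assume y: "y \<in> vecs n"
    show "(\<Prod>x\<in>B. chi (symp n y x) + 1) = (if y \<in> ?P then 2 ^ card B else 0)"
    proof (cases "y \<in> ?P")
      case True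
      then have "(\<Prod>x\<in>B. chi (symp n y x) + 1) = (\<Prod>x\<in>B. 2)" by (intro prod.cong) auto
      then show ?thesis using True by simp
    next
      case False
      then obtain x where "x \<in> B" "symp n y x = 1" using y by auto
      then have "(\<Prod>x\<in>B. chi (symp n y x) + 1) = 0" using fin by (intro prod_zero bexI[of _ x]) simp_all
      then show ?thesis using False by simp
    qed
  qed simp
  also have "\<dots> = (\<Sum>y\<in>vecs n \<inter> ?P. 2 ^ card B)"
    by (rule sum.inter_restrict[OF vecs_finite, symmetric])
  also have "\<dots> = (\<Sum>y\<in>?P. 2 ^ card B)"
    by (rule sum.cong) auto
  also have "\<dots> = real (card ?P) * 2 ^ card B" by simp
  finally have L: "(\<Sum>y\<in>vecs n. \<Prod>x\<in>B. chi (symp n y x) + 1) = real (card ?P) * 2 ^ card B" .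
  have "(\<Sum>y\<in>vecs n. \<Prod>x\<in>B. chi (symp n y x) + 1) =
        (\<Sum>y\<in>vecs n. \<Sum>X\<in>Pow B. chi (symp n y (vsum X)))"
  proof (rule sum.cong)
    fix y
    have "(\<Prod>x\<in>B. chi (symp n y x) + 1) = (\<Sum>X\<in>Pow B. (\<Prod>x\<in>X. chi (symp n y x)) * (\<Prod>x\<in>B-X. 1))"
      by (rule prod_add[OF fin])
    also have "\<dots> = (\<Sum>X\<in>Pow B. chi (symp n y (vsum X)))"
    proof (rule sum.cong)
      fix X assume "X \<in> Pow B"
      then have "finite X" using fin finite_subset by auto
      then show "(\<Prod>x\<in>X. chi (symp n y x)) * (\<Prod>x\<in>B-X. 1) = chi (symp n y (vsum X))"
        by (simp add: chi_sum symp_vsum)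
    qed simp
    finally show "(\<Prod>x\<in>B. chi (symp n y x) + 1) = (\<Sum>X\<in>Pow B. chi (symp n y (vsum X)))" .
  qed simp
  also have "\<dots> = (\<Sum>X\<in>Pow B. \<Sum>y\<in>vecs n. chi (symp n y (vsum X)))" by (rule sum.swap)
  also have "\<dots> = (\<Sum>X\<in>Pow B. if X = {} then 2 ^ (2*n) else 0)"
  proof (rule sum.cong)
    fix X assume X: "X \<in> Pow B"
    show "(\<Sum>y\<in>vecs n. chi (symp n y (vsum X))) = (if X = {} then 2 ^ (2*n) else 0)"
    proof (cases "X = {}")
      case True
      have "vsum {} = (\<lambda>i. 0)" by (simp add: vsum_def)
      then show ?thesis using True by (simp add: symp_zero2 vecs_card)
    next
      case False
      have "vsum X \<in> vecs n" using X assms(2) by (intro vsum_vecs) auto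
      moreover have "vsum X \<noteq> (\<lambda>i. 0)" using vsum_nonzero[OF assms(1)] X False by auto
      ultimately obtain e where "e \<in> vecs n" "symp n e (vsum X) = 1" using exists_dual by blast
      then show ?thesis using False chi_balanced by simp
    qed
  qed simp
  also have "\<dots> = 2 ^ (2*n)" using fin by (simp add: sum.delta')
  finally show ?thesis using L by simp
qed



definition isol :: "nat \<Rightarrow> nat \<Rightarrow> (nat \<Rightarrow> bit) list set" where
  "isol n k = {xs \<in> indl (vecs n) k. \<forall>x\<in>set xs. \<forall>y\<in>set xs. symp n x y = 0}"

definition perpl :: "nat \<Rightarrow> (nat \<Rightarrow> bit) list \<Rightarrow> (nat \<Rightarrow> bit) set" where
  "perpl n xs = {y\<in>vecs n. \<forall>x\<in>set xs. symp n y x = 0}"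

lemma isol_finite: "finite (isol n k)"
  unfolding isol_def using indl_finite[OF vecs_finite] by simp

lemma card_perpl:
  assumes "xs \<in> indl (vecs n) k"
  shows "card (perpl n xs) * 2 ^ k = 2 ^ (2*n)"
proof -
  have "lin_indep2 (set xs)" "set xs \<subseteq> vecs n" "card (set xs) = k"
    using assms distinct_card[of xs] unfolding indl_def by auto
  then have "real (card (perpl n xs)) * 2 ^ k = 2 ^ (2*n)"
    using perp_count[of "set xs" n] unfolding perpl_def by simp
  then have "real (card (perpl n xs) * 2 ^ k) = real (2 ^ (2*n))" by simp
  then show ?thesis by (simp only: of_nat_eq_iff)
qed

lemma isol_0: "isol n 0 = {[]}"
  by (auto simp: isol_def indl_0)

lemma isol_Suc_subset:
  "isol n (Suc k) \<subseteq> (\<lambda>(xs,y). y#xs) ` Sigma (isol n k) (perpl n)"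
proof
  fix zs assume zs: "zs \<in> isol n (Suc k)"
  then have "zs \<in> indl (vecs n) (Suc k)" unfolding isol_def by simp
  then obtain xs y where e: "zs = y # xs" and xs: "xs \<in> indl (vecs n) k" and y: "y \<in> vecs n"
    unfolding indl_Suc by auto
  have o: "\<forall>x\<in>set zs. \<forall>y\<in>set zs. symp n x y = 0" using zs unfolding isol_def by simp
  have "xs \<in> isol n k" using xs o e unfolding isol_def by simp
  moreover have "y \<in> perpl n xs" using y o e unfolding perpl_def by simp
  ultimately show "zs \<in> (\<lambda>(xs,y). y#xs) ` Sigma (isol n k) (perpl n)" using e by auto
qed

lemma isol_step: "card (isol n (Suc k)) * 2 ^ k \<le> card (isol n k) * 2 ^ (2*n)"
proof -
  have "card (isol n (Suc k)) \<le> card ((\<lambda>(xs,y). y#xs) ` Sigma (isol n k) (perpl n))"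
    using isol_Suc_subset by (rule card_mono[rotated]) (auto intro!: finite_SigmaI isol_finite simp: perpl_def vecs_finite)
  also have "\<dots> \<le> card (Sigma (isol n k) (perpl n))" by (rule card_image_le) (auto intro!: finite_SigmaI isol_finite simp: perpl_def vecs_finite)
  also have "\<dots> = (\<Sum>xs\<in>isol n k. card (perpl n xs))"
    by (rule card_SigmaI) (auto intro!: isol_finite simp: perpl_def vecs_finite)
  finally have "card (isol n (Suc k)) * 2 ^ k \<le> (\<Sum>xs\<in>isol n k. card (perpl n xs)) * 2 ^ k" by simp
  also have "\<dots> = (\<Sum>xs\<in>isol n k. card (perpl n xs) * 2 ^ k)" by (simp add: sum_distrib_right)
  also have "\<dots> = (\<Sum>xs\<in>isol n k. 2 ^ (2*n))"
    by (rule sum.cong) (auto simp: card_perpl isol_def)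
  also have "\<dots> = card (isol n k) * 2 ^ (2*n)" by simp
  finally show ?thesis .
qed

definition tri :: "nat \<Rightarrow> nat" where "tri k = (\<Sum>i<k. i)"

lemma tri_Suc: "tri (Suc k) = tri k + k" by (simp add: tri_def)

lemma tri_real: "2 * real (tri k) = real k * (real k - 1)"
  by (induction k) (simp_all add: tri_Suc tri_def algebra_simps)

lemma card_indl_vecs: "card (indl (vecs n) k) = (\<Prod>i<k. 2^(2*n) - 2^i)"
  using card_indl[OF vecs_subspace vecs_finite] by (simp add: vecs_card)

lemma chain:
  "k \<le> 2*n \<Longrightarrow> card (isol n k) * 2 ^ tri k \<le> 2 ^ k * card (indl (vecs n) k)"
proof (induction k)
  case 0
  then show ?case by (simp add: isol_0 indl_0 tri_def)
next
  case (Suc k)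
  let ?A = "card (isol n k)" and ?A' = "card (isol n (Suc k))" and ?T = "card (indl (vecs n) k)"
  have IH: "?A * 2 ^ tri k \<le> 2 ^ k * ?T" using Suc by simp
  have T': "card (indl (vecs n) (Suc k)) = ?T * (2^(2*n) - 2^k)" by (simp add: card_indl_vecs)
  have pw: "2 ^ Suc k \<le> (2::nat) ^ (2*n)" using Suc(2) by (intro power_increasing) auto
  have "?A' * 2 ^ tri (Suc k) = (?A' * 2 ^ k) * 2 ^ tri k" by (simp add: tri_Suc power_add)
  also have "\<dots> \<le> (?A * 2 ^ (2*n)) * 2 ^ tri k" using isol_step by (rule mult_right_mono) simp
  also have "\<dots> = (?A * 2 ^ tri k) * 2 ^ (2*n)" by simp
  also have "\<dots> \<le> (2 ^ k * ?T) * 2 ^ (2*n)" using IH by (rule mult_right_mono) simp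
  also have "\<dots> \<le> (2 ^ k * ?T) * (2 * (2^(2*n) - 2^k))"
    using pw by (intro mult_left_mono) auto
  also have "\<dots> = 2 ^ Suc k * card (indl (vecs n) (Suc k))" by (simp add: T')
  finally show ?case .
qed



lemma subdim_props:
  assumes "subspace_dim n m V"
  shows "is_subspace n V" "finite V" "card V = 2 ^ m"
proof -
  obtain B where B: "B \<subseteq> V" "lin_indep2 B" "card B = m" "span2 B = V"
    using assms unfolding subspace_dim_def by blast
  show "is_subspace n V" using assms unfolding subspace_dim_def by blast
  show "finite V" "card V = 2 ^ m" using card_span2[OF B(2)] B by auto
qed

lemma span_eq:
  assumes "subspace_dim n m V" "xs \<in> indl V m"
  shows "span2 (set xs) = V"
proof (rule card_subset_eq)
  show "finite V" using subdim_props[OF assms(1)] by simp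
  have xs: "distinct xs" "length xs = m" "set xs \<subseteq> V" "lin_indep2 (set xs)"
    using assms(2) unfolding indl_def by auto
  show "span2 (set xs) \<subseteq> V"
    using span2_subset_subspace[OF subdim_props(1)[OF assms(1)]] xs by simp
  show "card (span2 (set xs)) = card V"
    using card_span2[OF xs(4)] distinct_card[OF xs(1)] xs(2) subdim_props(3)[OF assms(1)] by simp
qed

lemma span_subdim:
  assumes "xs \<in> indl (vecs n) m"
  shows "subspace_dim n m (span2 (set xs))" "xs \<in> indl (span2 (set xs)) m"
proof -
  have xs: "distinct xs" "length xs = m" "set xs \<subseteq> vecs n" "lin_indep2 (set xs)"
    using assms unfolding indl_def by auto
  have sup: "set xs \<subseteq> span2 (set xs)" by (rule span2_superset) simp
  show "subspace_dim n m (span2 (set xs))"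
    unfolding subspace_dim_def
    using span2_subspace[of "set xs" n] xs sup distinct_card[OF xs(1)] by auto
  show "xs \<in> indl (span2 (set xs)) m" using xs sup unfolding indl_def by auto
qed

definition cm :: "nat \<Rightarrow> nat" where "cm m = (\<Prod>i<m. 2^m - 2^i)"

lemma cm_pos: "cm m > 0"
  unfolding cm_def by (intro prod_pos) (auto intro: power_strict_increasing)

lemma card_indl_V: "subspace_dim n m V \<Longrightarrow> card (indl V m) = cm m"
  using card_indl[OF subdim_props(1,2)] subdim_props(3) by (simp add: cm_def)

lemma subspaces_finite: "finite {V. subspace_dim n m V}"
proof (rule finite_subset)
  show "{V. subspace_dim n m V} \<subseteq> Pow (vecs n)"
    using subdim_props(1) unfolding is_subspace_def by blast
  show "finite (Pow (vecs n))" using vecs_finite by simp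
qed



lemma total_bound:
  "card (indl (vecs n) m) \<le> card {V. subspace_dim n m V} * cm m"
proof -
  let ?S = "{V. subspace_dim n m V}"
  have "indl (vecs n) m \<subseteq> (\<Union>V\<in>?S. indl V m)"
  proof
    fix xs assume xs: "xs \<in> indl (vecs n) m"
    have "span2 (set xs) \<in> ?S" using span_subdim(1)[OF xs] by simp
    then show "xs \<in> (\<Union>V\<in>?S. indl V m)" using span_subdim(2)[OF xs] by (rule UN_I)
  qed
  then have "card (indl (vecs n) m) \<le> card (\<Union>V\<in>?S. indl V m)"
    by (rule card_mono[rotated]) (auto intro!: indl_finite subspaces_finite dest: subdim_props(2))
  also have "\<dots> \<le> (\<Sum>V\<in>?S. card (indl V m))" by (rule card_UN_le[OF subspaces_finite])
  also have "\<dots> = (\<Sum>V\<in>?S. cm m)" by (rule sum.cong) (auto simp: card_indl_V)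
  finally show ?thesis by simp
qed

lemma iso_bound:
  "card {V. subspace_dim n m V \<and> V \<subseteq> symp_perp n V} * cm m \<le> card (isol n m)"
proof -
  let ?I = "{V. subspace_dim n m V \<and> V \<subseteq> symp_perp n V}"
  have finI: "finite ?I" by (rule finite_subset[OF _ subspaces_finite]) blast
  have "(\<Sum>V\<in>?I. card (indl V m)) = (\<Sum>V\<in>?I. cm m)" by (rule sum.cong) (auto simp: card_indl_V)
  then have "card ?I * cm m = (\<Sum>V\<in>?I. card (indl V m))" by simp
  also have "\<dots> = card (\<Union>V\<in>?I. indl V m)"
  proof (rule card_UN_disjoint[symmetric, OF finI])
    show "\<forall>V\<in>?I. finite (indl V m)" by (auto intro!: indl_finite dest: subdim_props(2))
    show "\<forall>V\<in>?I. \<forall>W\<in>?I. V \<noteq> W \<longrightarrow> indl V m \<inter> indl W m = {}"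
    proof (intro ballI impI)
      fix V W assume V: "V \<in> ?I" and W: "W \<in> ?I" and ne: "V \<noteq> W"
      show "indl V m \<inter> indl W m = {}"
      proof (rule ccontr)
        assume "indl V m \<inter> indl W m \<noteq> {}"
        then obtain xs where "xs \<in> indl V m" "xs \<in> indl W m" by blast
        then have "span2 (set xs) = V" "span2 (set xs) = W"
          using span_eq V W by auto
        then show False using ne by simp
      qed
    qed
  qed
  also have "\<dots> \<le> card (isol n m)"
  proof (rule card_mono[OF isol_finite])
    show "(\<Union>V\<in>?I. indl V m) \<subseteq> isol n m"
    proof
      fix xs assume "xs \<in> (\<Union>V\<in>?I. indl V m)"
      then obtain V where V: "subspace_dim n m V" "V \<subseteq> symp_perp n V" and xs: "xs \<in> indl V m" by blast
      have "V \<subseteq> vecs n" using subdim_props(1)[OF V(1)] unfolding is_subspace_def by blast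
      then have "xs \<in> indl (vecs n) m" using xs unfolding indl_def by auto
      moreover have "\<forall>x\<in>set xs. \<forall>y\<in>set xs. symp n x y = 0"
        using xs V(2) unfolding indl_def symp_perp_def by blast
      ultimately show "xs \<in> isol n m" unfolding isol_def by simp
    qed
  qed
  finally show ?thesis .
qed

lemma prob_bound:
  assumes "m \<le> 2*n"
  shows "prob_isotropic n m \<le> 2 ^ m / 2 ^ tri m"
proof -
  let ?S = "card {V. subspace_dim n m V}" and ?I = "card {V. subspace_dim n m V \<and> V \<subseteq> symp_perp n V}"
  let ?T = "card (indl (vecs n) m)" and ?A = "card (isol n m)"
  show ?thesis
  proof (cases "?S = 0")
    case True
    then show ?thesis by (simp add: prob_isotropic_def)
  next
    case False
    have c: "real (cm m) > 0" using cm_pos by simp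
    have Tpos: "?T > 0" unfolding card_indl_vecs
      using assms by (intro prod_pos) (auto intro: power_strict_increasing)
    have "real (?I * cm m) \<le> real ?A" using iso_bound by (simp only: of_nat_le_iff)
    then have h1: "real ?I * real (cm m) \<le> real ?A" by simp
    have "real ?T \<le> real (?S * cm m)" using total_bound by (simp only: of_nat_le_iff)
    then have h2: "real ?T \<le> real ?S * real (cm m)" by simp
    have "real (?A * 2 ^ tri m) \<le> real (2 ^ m * ?T)" using chain[OF assms] by (simp only: of_nat_le_iff)
    then have h3: "real ?A * 2 ^ tri m \<le> 2 ^ m * real ?T" by simp
    have "prob_isotropic n m = real ?I * real (cm m) / (real ?S * real (cm m))"
      using c by (simp add: prob_isotropic_def)
    also have "\<dots> \<le> real ?A / (real ?S * real (cm m))"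
      using h1 False c by (intro divide_right_mono) auto
    also have "\<dots> \<le> real ?A / real ?T"
      using h2 Tpos by (intro divide_left_mono) auto
    also have "\<dots> \<le> 2 ^ m / 2 ^ tri m"
      using h3 Tpos by (simp add: divide_simps mult.commute)
    finally show ?thesis .
  qed
qed



lemma exponent_bound:
  fixes \<epsilon> x t y :: real
  assumes "\<epsilon> > 0" "\<epsilon> * y \<le> x" "6 \<le> \<epsilon> * y" "2 * t = x * (x - 1)"
  shows "x - t \<le> - (\<epsilon>^2/4) * y^2"
proof -
  have x6: "6 \<le> x" using assms by linarith
  have "(\<epsilon> * y)^2 \<le> x^2" using assms(2,3) by (intro power_mono) auto
  then have a: "\<epsilon>^2 * y^2 \<le> x^2" by (simp add: power_mult_distrib)
  have b: "6 * x \<le> x * x" using x6 by (intro mult_right_mono) auto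
  have "x - t = - (x^2 - 3*x) / 2" using assms(4) by (simp add: power2_eq_square algebra_simps)
  also have "\<dots> \<le> (- (x^2)) / 4" using b by (simp add: power2_eq_square)
  also have "\<dots> \<le> - (\<epsilon>^2/4) * y^2" using a by simp
  finally show ?thesis .
qed

theorem lemmaD4:
  fixes \<epsilon> :: real
  assumes "\<epsilon> > 0"
  shows "\<exists>\<delta>>0. \<exists>N. \<forall>n\<ge>N. \<forall>m. \<epsilon> * real n \<le> real m \<and> m \<le> 2*n \<longrightarrow>
           prob_isotropic n m \<le> 2 powr (- \<delta> * (real n)^2)"
proof (intro exI conjI allI impI)
  show "\<epsilon>^2/4 > 0" using assms by simp
  fix n m :: nat
  assume n: "nat \<lceil>6/\<epsilon>\<rceil> \<le> n" and m: "\<epsilon> * real n \<le> real m \<and> m \<le> 2*n"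
  have "6/\<epsilon> \<le> real n" using n by linarith
  then have e6: "6 \<le> \<epsilon> * real n" using assms by (simp add: field_simps)
  have "prob_isotropic n m \<le> 2 ^ m / 2 ^ tri m" using prob_bound m by blast
  also have "\<dots> = 2 powr (real m - real (tri m))"
    by (simp add: powr_diff powr_realpow)
  also have "\<dots> \<le> 2 powr (- (\<epsilon>^2/4) * (real n)^2)"
    using exponent_bound[OF assms _ e6 tri_real[of m]] m by (intro powr_mono) auto
  finally show "prob_isotropic n m \<le> 2 powr (- (\<epsilon>^2/4) * (real n)^2)" .
qed

end
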